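(* $$\sum_{n=0}^{\infty}\frac{(-1)^{m_n}}{c(n)}=\frac12 .$$
   Context: For $n\ge 0$, $c(n)=\sum_{i=0}^{n}\left(\binom{n}{i}\bmod 2\right)2^{i}$, the integer whose binary digits form the $n$-th row of Pascal's triangle modulo $2$. $(m_n)_{n\ge0}$ is the Thue–Morse sequence: $m_n\equiv s(n)\pmod 2$, where $s(n)$ is the number of $1$'s in the binary expansion of $n$. *)

theory Defs
  imports Complex_Main
begin

definition pascal_mod2_row :: "nat \<Rightarrow> nat" where
  "pascal_mod2_row n = (\<Sum>i=0..n. ((n choose i) mod 2) * 2 ^ i)"

fun bin_ones :: "nat \<Rightarrow> nat" where
  "bin_ones n = (if n = 0 then 0 else n mod 2 + bin_ones (n div 2))"

declare bin_ones.simps[simp del]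

definition thue_morse :: "nat \<Rightarrow> nat" where
  "thue_morse n = bin_ones n mod 2"

end

theory Submission
  imports Defs
begin

lemma choose_SS: "Suc (Suc m) choose Suc (Suc k) = (m choose Suc (Suc k)) + 2*(m choose Suc k) + (m choose k)"
  by simp
lemma mod3: "((a::nat) + 2*b + c) mod 2 = (a mod 2 + c mod 2) mod 2" by presburger

lemma choose_even: "(2*n choose (2*i)) mod 2 = (n choose i) mod 2 \<and> (2*n choose (2*i+1)) mod 2 = 0"
proof (induction n arbitrary: i)
  case 0
  then show ?case by (cases i) auto
next
  case (Suc n)
  have e: "2 * Suc n = Suc (Suc (2*n))" by simp
  show ?case
  proof (cases i)
    case 0
    then show ?thesis by (simp add: e)
  next
    case (Suc j)
    have h1: "(Suc (Suc (2*n)) choose Suc (Suc (2*j))) mod 2 = ((2*n choose Suc (Suc (2*j))) mod 2 + (2*n choose (2*j)) mod 2) mod 2"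
      by (simp only: choose_SS mod3)
    have h2: "(Suc (Suc (2*n)) choose Suc (Suc (Suc (2*j)))) mod 2 = ((2*n choose Suc (Suc (Suc (2*j)))) mod 2 + (2*n choose Suc (2*j)) mod 2) mod 2"
      by (simp only: choose_SS mod3)
    have i1: "2*i = Suc (Suc (2*j))" "2*i+1 = Suc (Suc (Suc (2*j)))" using Suc by auto
    have i2: "2*(j+1) = Suc (Suc (2*j))" "2*(j+1)+1 = Suc (Suc (Suc (2*j)))" "2*j+1 = Suc (2*j)" by auto
    have I1: "(2*n choose Suc (Suc (2*j))) mod 2 = (n choose (j+1)) mod 2"
      "(2*n choose Suc (Suc (Suc (2*j)))) mod 2 = 0"
      using Suc.IH[of "j+1"] unfolding i2 by auto
    have I2: "(2*n choose (2*j)) mod 2 = (n choose j) mod 2"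
      "(2*n choose Suc (2*j)) mod 2 = 0"
      using Suc.IH[of "j"] unfolding i2 by auto
    have "(Suc n choose i) = (n choose j) + (n choose (j+1))" using Suc by simp
    then have X: "(Suc n choose i) mod 2 = ((n choose (j+1)) mod 2 + (n choose j) mod 2) mod 2"
      by presburger
    have g1: "(2*Suc n choose (2*i)) mod 2 = (Suc n choose i) mod 2"
      unfolding e i1 h1 I1 I2 X ..
    have g2: "(2*Suc n choose (2*i+1)) mod 2 = 0"
      by (subst i1(2), subst e, subst h2) (metis I1(2) I2(2) add_0 mod_0)
    show ?thesis using g1 g2 by blast
  qed
qed

definition BB :: "nat \<Rightarrow> nat \<Rightarrow> nat" where "BB n i = (n choose i) mod 2"
definition CC :: "nat \<Rightarrow> nat \<Rightarrow> nat" where "CC n x = (\<Sum>i=0..n. BB n i * x ^ i)"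
lemma choose_odd: "(2*n+1 choose (2*i)) mod 2 = (n choose i) mod 2 \<and> (2*n+1 choose (2*i+1)) mod 2 = (n choose i) mod 2"
proof (cases i)
  case 0
  then show ?thesis using choose_even[of n 0] by simp
next
  case (Suc j)
  have "(2*n+1 choose (2*i)) = (2*n choose (2*j+1)) + (2*n choose (2*(j+1)))"
    using Suc by simp
  then have 1: "(2*n+1 choose (2*i)) mod 2 = (n choose i) mod 2"
    using choose_even[of n j] choose_even[of n "j+1"] Suc by (simp add: mod_add_eq[symmetric])
  have "(2*n+1 choose (2*i+1)) = (2*n choose (2*i)) + (2*n choose (2*i+1))" by simp
  then have 2: "(2*n+1 choose (2*i+1)) mod 2 = (n choose i) mod 2"
    using choose_even[of n i] by (simp add: mod_add_eq[symmetric])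
  show ?thesis using 1 2 by simp
qed

lemma sum_even_odd: "(\<Sum>i<2*(M::nat). f i) = (\<Sum>j<M. f (2*j) + f (2*j+1))"
  by (induction M) (simp_all add: algebra_simps)

lemma CC_upto: "n < M \<Longrightarrow> CC n x = (\<Sum>i<M. BB n i * x ^ i)"
proof -
  assume "n < M"
  have "(\<Sum>i<M. BB n i * x ^ i) = (\<Sum>i\<in>{0..n}. BB n i * x ^ i)"
    by (rule sum.mono_neutral_right) (use \<open>n < M\<close> in \<open>auto simp: BB_def binomial_eq_0\<close>)
  then show ?thesis unfolding CC_def by simp
qed

lemma CC_even: "CC (2*n) x = CC n (x^2)"
proof -
  have "CC (2*n) x = (\<Sum>i<2*(n+1). BB (2*n) i * x ^ i)" by (rule CC_upto) simp
  also have "\<dots> = (\<Sum>j<n+1. BB (2*n) (2*j) * x^(2*j) + BB (2*n) (2*j+1) * x^(2*j+1))"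
    by (rule sum_even_odd)
  also have "\<dots> = (\<Sum>j<n+1. BB n j * (x^2)^j)"
    using choose_even by (simp add: BB_def power_mult)
  also have "\<dots> = CC n (x^2)" by (rule CC_upto[symmetric]) simp
  finally show ?thesis .
qed

lemma CC_odd: "CC (2*n+1) x = (1 + x) * CC n (x^2)"
proof -
  have "CC (2*n+1) x = (\<Sum>i<2*(n+1). BB (2*n+1) i * x ^ i)" by (rule CC_upto) simp
  also have "\<dots> = (\<Sum>j<n+1. BB (2*n+1) (2*j) * x^(2*j) + BB (2*n+1) (2*j+1) * x^(2*j+1))"
    by (rule sum_even_odd)
  also have "\<dots> = (\<Sum>j<n+1. (1 + x) * (BB n j * (x^2)^j))"
  proof (rule sum.cong)
    fix j
    have b1: "BB (2*n+1) (2*j) = BB n j" "BB (2*n+1) (2*j+1) = BB n j"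
      using choose_odd[of n j] unfolding BB_def by blast+
    have p: "x^(2*j+1) = x * (x^2)^j" "x^(2*j) = (x^2)^j" by (simp_all add: power_mult)
    show "BB (2*n+1) (2*j) * x^(2*j) + BB (2*n+1) (2*j+1) * x^(2*j+1) = (1 + x) * (BB n j * (x^2)^j)"
      unfolding b1 p by (simp add: algebra_simps)
  qed simp
  also have "\<dots> = (1 + x) * (\<Sum>j<n+1. BB n j * (x^2)^j)" by (simp only: sum_distrib_left)
  also have "\<dots> = (1 + x) * CC n (x^2)" using CC_upto[of n "n+1" "x^2"] by simp
  finally show ?thesis .
qed

lemma bin_ones_even: "bin_ones (2*n) = bin_ones n"
  by (cases "n = 0") (simp_all add: bin_ones.simps[of "2*n"] bin_ones.simps[of 0])

lemma bin_ones_odd: "bin_ones (2*n+1) = bin_ones n + 1"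
  using bin_ones.simps[of "2*n+1"] by simp

lemma pow_mod2: "(-1::real) ^ (k mod 2) = (-1) ^ k"
  by (simp add: minus_one_power_iff)

lemma tm: "(-1::real) ^ thue_morse n = (-1) ^ bin_ones n"
  unfolding thue_morse_def by (rule pow_mod2)


lemma alg0: "1+(y::real) \<noteq> 0 \<Longrightarrow> z - z/(1+y) = y/(1+y)*z"
  by (simp add: field_simps)
lemma alg: "(c::real) > 0 \<Longrightarrow> 1+y > 0 \<Longrightarrow> a/c + (-a)/((1+y)*c) = y/(1+y)*(a/c)"
proof -
  assume "c > 0" "1+y>0"
  have "a/c + (-a)/((1+y)*c) = a/c - (a/c)/(1+y)" by (simp add: mult.commute)
  also have "\<dots> = y/(1+y)*(a/c)" by (rule alg0) (use \<open>1+y>0\<close> in simp)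
  finally show ?thesis .
qed

lemma gen: "(y::real)^2*t > 1 \<Longrightarrow> 1+y > 0 \<Longrightarrow> y/(1+y) * (t*(y^2-1)/(y^2*t-1)) = y*t*(y-1)/(y^2*t-1)"
proof -
  assume a: "y^2*t > 1" "1+y>0"
  have "y^2-1 = (y-1)*(1+y)" by (simp add: algebra_simps power2_eq_square)
  then have "y/(1+y) * (t*(y^2-1)/(y^2*t-1)) = (y/(1+y)*(1+y)) * (t*(y-1)/(y^2*t-1))" by simp
  also have "y/(1+y)*(1+y) = y" using a by simp
  finally show ?thesis by simp
qed

lemma CC_ge: "x > 0 \<Longrightarrow> CC n x \<ge> x ^ n"
proof -
  assume "x > 0"
  have "BB n n * x ^ n \<le> (\<Sum>i=0..n. BB n i * x ^ i)"
    by (rule member_le_sum) auto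
  then show ?thesis by (simp add: CC_def BB_def)
qed

lemma partial:
  fixes x :: nat
  assumes "x \<ge> 2"
  shows "(\<Sum>n<2^K. (-1::real) ^ bin_ones n / real (CC n x))
         = real x ^ (2^K - 1) * (real x - 1) / (real x ^ (2^K) - 1)"
  using assms
proof (induction K arbitrary: x)
  case 0
  have "CC 0 x = 1" by (simp add: CC_def BB_def)
  then show ?case using 0 by (simp add: bin_ones.simps[of 0])
next
  case (Suc K)
  define y where "y = real x"
  have y2: "y \<ge> 2" using Suc.prems y_def by simp
  have x2: "x^2 \<ge> 2" using Suc.prems by (metis le_trans power2_nat_le_imp_le nat_le_linear numeral_le_iff power2_eq_square semiring_norm(69) one_le_numeral le_square)
  obtain m where m: "(2::nat)^K = Suc m" by (metis not0_implies_Suc power_not_zero zero_neq_numeral)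
  have "(\<Sum>n<2^Suc K. (-1::real) ^ bin_ones n / real (CC n x))
     = (\<Sum>j<2^K. (-1::real) ^ bin_ones (2*j) / real (CC (2*j) x) + (-1::real) ^ bin_ones (2*j+1) / real (CC (2*j+1) x))"
    by (simp add: sum_even_odd)
  also have "\<dots> = (\<Sum>j<2^K. (y/(1+y)) * ((-1::real) ^ bin_ones j / real (CC j (x^2))))"
  proof (rule sum.cong[OF refl])
    fix j
    have c: "real (CC j (x^2)) > 0" using CC_ge[of "x^2" j] Suc.prems
      by (metis le_trans linorder_not_le of_nat_0_less_iff one_le_numeral power_eq_0_iff zero_less_iff_neq_zero le_zero_eq not_numeral_le_zero)
    have y: "1 + y > 0" using y2 by simp
    show "(-1::real) ^ bin_ones (2*j) / real (CC (2*j) x) + (-1::real) ^ bin_ones (2*j+1) / real (CC (2*j+1) x) = (y/(1+y)) * ((-1::real) ^ bin_ones j / real (CC j (x^2)))"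
    proof -
      have e: "(-1::real)^(bin_ones j + 1) = - ((-1)^bin_ones j)" by simp
      have r: "real ((1+x) * CC j (x^2)) = (1+y) * real (CC j (x^2))" by (simp add: y_def algebra_simps)
      show ?thesis unfolding bin_ones_even bin_ones_odd CC_even CC_odd e r by (rule alg[OF c y])
    qed
  qed
  also have "\<dots> = (y/(1+y)) * (\<Sum>j<2^K. (-1::real) ^ bin_ones j / real (CC j (x^2)))"
    by (simp add: sum_distrib_left)
  also have "\<dots> = (y/(1+y)) * ((y^2) ^ (2^K - 1) * (y^2 - 1) / ((y^2) ^ (2^K) - 1))"
    using Suc.IH[OF x2] by (simp add: y_def)
  also have "\<dots> = y ^ (2^Suc K - 1) * (y - 1) / (y ^ (2^Suc K) - 1)"
  proof -
    define t where "t = y^(2*m)"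
    have f1: "(y^2)^(2^K-1) = t" unfolding m t_def by (simp add: power_mult)
    have f2: "(y^2)^(2^K) = y^2*t" unfolding m t_def by (simp add: power_mult)
    have f3: "y^(2^Suc K - 1) = y*t" using m unfolding t_def by simp
    have f4: "y^(2^Suc K) = y^2*t" using m unfolding t_def by (simp add: power2_eq_square)
    have yy: "y*y \<ge> 2*2" by (rule mult_mono) (use y2 in auto)
    have p: "y^2*t > 1" using yy f2 one_less_power[of "y^2" "2^K"] y2 by (simp add: power2_eq_square)
    have q: "1 + y > 0" using y2 by simp
    show ?thesis unfolding f1 f2 f3 f4 by (rule gen[OF p q])
  qed
  finally show ?case by (simp add: y_def)
qed

theorem mainTheorem16:
  shows "(\<lambda>n. (-1) ^ thue_morse n / real (pascal_mod2_row n)) sums (1/2 :: real)"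
proof -
  define f where "f = (\<lambda>n. (-1::real) ^ thue_morse n / real (pascal_mod2_row n))"
  have pc: "pascal_mod2_row n = CC n 2" for n by (simp add: pascal_mod2_row_def CC_def BB_def)
  have bnd: "norm (f n) \<le> (1/2) ^ n" for n
  proof -
    have "real (2^n) \<le> real (CC n 2)" using CC_ge[of 2 n] by linarith
    then have "(2::real)^n \<le> real (CC n 2)" by simp
    moreover have "(0::real) < 2^n" by simp
    moreover have "0 < real (CC n 2)" using calculation by linarith
    ultimately have "1 / real (CC n 2) \<le> 1 / 2^n" by (intro divide_left_mono) auto
    then show ?thesis by (simp add: f_def pc power_one_over abs_mult)
  qed
  have S: "summable f"
    by (rule summable_comparison_test[OF _ summable_geometric[of "1/2::real"]]) (use bnd in auto)
  have sm: "strict_mono (\<lambda>K::nat. (2::nat)^K)"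
    by (rule strict_monoI) simp
  have L1: "(\<lambda>K. sum f {..<2^K}) \<longlonglongrightarrow> suminf f"
    using LIMSEQ_subseq_LIMSEQ[OF summable_LIMSEQ[OF S] sm] by (simp add: o_def)
  have eqs: "sum f {..<2^K} = (1/2) / (1 - (1/2)^(2^K))" for K
  proof -
    have "sum f {..<2^K} = (\<Sum>n<2^K. (-1::real) ^ bin_ones n / real (CC n 2))"
      by (simp add: f_def tm pc)
    also have "\<dots> = 2 ^ (2^K - 1) * (2 - 1) / (2 ^ (2^K) - 1)"
      using partial[of 2 K] by simp
    also have "\<dots> = (1/2) / (1 - (1/2)^(2^K))"
    proof -
      obtain m where m: "(2::nat)^K = Suc m" by (metis not0_implies_Suc power_not_zero zero_neq_numeral)
      have "(2::real)^m * 2 > 1" by (metis m numeral_One one_less_power power_Suc2 zero_less_Suc one_less_numeral_iff semiring_norm(76))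
      then show ?thesis unfolding m by (simp add: field_simps power_one_over)
    qed
    finally show ?thesis .
  qed
  have z: "(\<lambda>N. (1/2::real)^N) \<longlonglongrightarrow> 0" by (rule LIMSEQ_power_zero) simp
  have z2: "(\<lambda>K. (1/2::real)^(2^K)) \<longlonglongrightarrow> 0"
    using LIMSEQ_subseq_LIMSEQ[OF z sm] by (simp add: o_def)
  have L2: "(\<lambda>K. sum f {..<2^K}) \<longlonglongrightarrow> (1/2) / (1 - 0)"
    unfolding eqs by (intro tendsto_intros z2) simp
  have h: "suminf f = 1/2" using LIMSEQ_unique[OF L1 L2] by simp
  have "f sums (1/2)" using summable_sums[OF S] unfolding h .
  then show ?thesis unfolding f_def .
qed

end
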